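(* Let $G=(V,E)$ be a graph and suppose there is a graphical instance $(f_v)_{v\in V}$ on $G$ for which $G$ has no EFX orientation, and an edge $e=uv\in E$ that has zero value for both of its endpoints $u$ and $v$. Let $G'$ be obtained from $G$ by replacing the edge $e$ with a path of any odd length from $u$ to $v$ whose internal vertices are new. Then $G'$ is not strongly EFX-orientable.
   Context: All graphs are finite and simple. For a graph $G=(V,E)$ and $v\in V$, $E(v)$ is the set of edges incident to $v$. A graphical instance on $G$ assigns to each vertex $v$ a valuation $f_v:2^E\to\mathbb{R}_{\ge 0}$ that is monotone ($A\subseteq B\Rightarrow f_v(A)\le f_v(B)$) and satisfies $f_v(X)=f_v(X\cap E(v))$ for all $X\subseteq E$. An item (edge) $m$ has zero value to agent (vertex) $i$ if $f_i(X\setminus\{m\})=f_i(X)$ for all $X\subseteq E$. An orientation of $G$ chooses for each edge one of its endpoints as its head; vertex $v$ receives the bundle $X_v$ of edges whose head is $v$. The orientation is EFX if for all $u,v\in V$ and every $g\in X_v$, $f_u(X_u)\ge f_u(X_v\setminus\{g\})$. A graph $G$ is strongly EFX-orientable if for every graphical instance on $G$ there exists an EFX orientation. *)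

theory Defs
  imports Complex_Main
begin

definition simple_graph :: "'v set \<Rightarrow> 'v set set \<Rightarrow> bool" where
  "simple_graph V E \<longleftrightarrow> finite V \<and>
     (\<forall>e\<in>E. \<exists>x y. e = {x, y} \<and> x \<noteq> y \<and> x \<in> V \<and> y \<in> V)"

definition incident :: "'v set set \<Rightarrow> 'v \<Rightarrow> 'v set set" where
  "incident E v = {e \<in> E. v \<in> e}"

definition graphical_instance :: "'v set \<Rightarrow> 'v set set \<Rightarrow> ('v \<Rightarrow> 'v set set \<Rightarrow> real) \<Rightarrow> bool" where
  "graphical_instance V E f \<longleftrightarrow>
     (\<forall>v\<in>V. (\<forall>X. X \<subseteq> E \<longrightarrow> f v X \<ge> 0)
          \<and> (\<forall>A B. A \<subseteq> B \<longrightarrow> B \<subseteq> E \<longrightarrow> f v A \<le> f v B)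
          \<and> (\<forall>X. X \<subseteq> E \<longrightarrow> f v X = f v (X \<inter> incident E v)))"

definition zero_value :: "'v set set \<Rightarrow> ('v \<Rightarrow> 'v set set \<Rightarrow> real) \<Rightarrow> 'v \<Rightarrow> 'v set \<Rightarrow> bool" where
  "zero_value E f i m \<longleftrightarrow> (\<forall>X. X \<subseteq> E \<longrightarrow> f i (X - {m}) = f i X)"

definition orientation :: "'v set set \<Rightarrow> ('v set \<Rightarrow> 'v) \<Rightarrow> bool" where
  "orientation E h \<longleftrightarrow> (\<forall>e\<in>E. h e \<in> e)"

definition bundle_of :: "'v set set \<Rightarrow> ('v set \<Rightarrow> 'v) \<Rightarrow> 'v \<Rightarrow> 'v set set" where
  "bundle_of E h v = {e \<in> E. h e = v}"

definition EFX_orientation :: "'v set \<Rightarrow> 'v set set \<Rightarrow> ('v \<Rightarrow> 'v set set \<Rightarrow> real) \<Rightarrow> ('v set \<Rightarrow> 'v) \<Rightarrow> bool" where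
  "EFX_orientation V E f h \<longleftrightarrow> orientation E h \<and>
     (\<forall>u\<in>V. \<forall>v\<in>V. \<forall>g\<in>bundle_of E h v.
        f u (bundle_of E h u) \<ge> f u (bundle_of E h v - {g}))"

definition strongly_EFX_orientable :: "'v set \<Rightarrow> 'v set set \<Rightarrow> bool" where
  "strongly_EFX_orientable V E \<longleftrightarrow>
     (\<forall>f. graphical_instance V E f \<longrightarrow> (\<exists>h. EFX_orientation V E f h))"

definition path_edges :: "'v list \<Rightarrow> 'v set set" where
  "path_edges p = {{p ! i, p ! Suc i} | i. Suc i < length p}"

end

theory Submission
  imports Defs
begin

theorem mainTheorem12:
  fixes V :: "'v set" and E :: "'v set set" and f :: "'v \<Rightarrow> 'v set set \<Rightarrow> real"
    and u v :: 'v and p :: "'v list"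
  assumes G: "simple_graph V E"
    and inst: "graphical_instance V E f"
    and noEFX: "\<not> (\<exists>h. EFX_orientation V E f h)"
    and e: "{u, v} \<in> E"
    and zu: "zero_value E f u {u, v}"
    and zv: "zero_value E f v {u, v}"
    and p_dist: "distinct p"
    and p_ne: "p \<noteq> []"
    and p_hd: "hd p = u"
    and p_last: "last p = v"
    and p_odd: "odd (length p - 1)"
    and p_new: "\<forall>w\<in>set p - {u, v}. w \<notin> V"
  shows "\<not> strongly_EFX_orientable (V \<union> set p) ((E - {{u, v}}) \<union> path_edges p)"
proof
  assume SE: "strongly_EFX_orientable (V \<union> set p) ((E - {{u, v}}) \<union> path_edges p)"
  define n where "n = length p"
  have EV: "\<And>x e. e \<in> E \<Longrightarrow> x \<in> e \<Longrightarrow> x \<in> V"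
  proof -
    fix x e assume xe: "e \<in> E" "x \<in> e"
    then obtain a b where "e = {a,b}" "a \<in> V" "b \<in> V"
      using G unfolding simple_graph_def by blast
    then show "x \<in> V" using xe by auto
  qed
  have uv: "u \<noteq> v"
  proof
    assume "u = v"
    then obtain x y where "{u} = {x,y}" "x \<noteq> y" using G e unfolding simple_graph_def by force
    then show False by (metis insert_absorb2 doubleton_eq_iff)
  qed
  have uV: "u \<in> V" "v \<in> V" using EV e by auto
  have n2: "n \<ge> 2" using p_odd unfolding n_def by presburger
  have p0: "p!0 = u" using p_hd p_ne by (simp add: hd_conv_nth)
  have pl: "p!(n-1) = v" using p_last p_ne by (simp add: last_conv_nth n_def)
  have idx: "\<And>i j. i < n \<Longrightarrow> j < n \<Longrightarrow> p!i = p!j \<longleftrightarrow> i = j"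
    using p_dist unfolding n_def by (simp add: nth_eq_iff_index_eq)
  show False
  proof (cases "n = 2")
    case True
    have pe: "path_edges p = {{u,v}}"
    proof -
      have "path_edges p = {{p!0, p!1}}"
        unfolding path_edges_def using True n_def by auto
      then show ?thesis using p0 pl True by simp
    qed
    have sp: "set p = {u, v}"
    proof -
      have "set p = {p!i | i. i < n}" unfolding n_def by (auto simp: in_set_conv_nth)
      also have "\<dots> = {p!0, p!1}" using True by (auto simp: less_2_cases_iff)
      finally show ?thesis using p0 pl True by simp
    qed
    have "V \<union> set p = V" using sp uV by auto
    moreover have "(E - {{u, v}}) \<union> path_edges p = E" using pe e by auto
    ultimately have "strongly_EFX_orientable V E" using SE by simp
    then show False using inst noEFX unfolding strongly_EFX_orientable_def by blast
  next
    case False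
    have n4: "n \<ge> 4" and nev: "even n" using False n2 p_odd unfolding n_def by presburger+
    define ed where "ed i = {p!i, p!Suc i}" for i
    define M where "M = ed ` {i. odd i \<and> Suc i < n}"
    define E' where "E' = (E - {{u, v}}) \<union> path_edges p"
    define V' where "V' = V \<union> set p"
    define f' where "f' w X = (if w \<in> V then f w (X \<inter> E) else real (card {e \<in> X \<inter> M. w \<in> e}))" for w X
    have pe: "path_edges p = ed ` {i. Suc i < n}"
      unfolding path_edges_def ed_def n_def by auto
    have internal: "\<And>i. 0 < i \<Longrightarrow> i < n - 1 \<Longrightarrow> p!i \<notin> V"
    proof -
      fix i assume i: "0 < i" "i < n - 1"
      have "p!i \<in> set p" using i n_def by simp
      moreover have "p!i \<noteq> u" using idx[of i 0] i p0 by auto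
      moreover have "p!i \<noteq> v" using idx[of i "n-1"] i pl by auto
      ultimately show "p!i \<notin> V" using p_new by blast
    qed
    have ed_notE: "\<And>i. Suc i < n \<Longrightarrow> ed i \<notin> E"
    proof
      fix i assume i: "Suc i < n" "ed i \<in> E"
      show False
      proof (cases "i = 0")
        case True
        then have "p!1 \<notin> V" using internal n4 by simp
        moreover have "p!1 \<in> ed i" using True ed_def by simp
        ultimately show False using EV i by blast
      next
        case False
        then have "p!i \<notin> V" using internal i by simp
        moreover have "p!i \<in> ed i" using ed_def by simp
        ultimately show False using EV i by blast
      qed
    qed
    have uvP: "{u,v} \<notin> path_edges p" using pe ed_notE e by auto
    have finM: "finite M"
    proof -
      have "finite {i. odd i \<and> Suc i < n}" by (rule finite_subset[of _ "{..<n}"]) auto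
      then show ?thesis unfolding M_def by simp
    qed
    have MP: "M \<subseteq> path_edges p" unfolding M_def pe by auto
    have Mw: "\<And>i w. odd i \<Longrightarrow> Suc i < n \<Longrightarrow> w = p!i \<or> w = p!Suc i \<Longrightarrow> {e \<in> M. w \<in> e} = {ed i}"
    proof -
      fix i w assume i: "odd i" "Suc i < n" "w = p!i \<or> w = p!Suc i"
      show "{e \<in> M. w \<in> e} = {ed i}"
      proof
        show "{ed i} \<subseteq> {e \<in> M. w \<in> e}" using i unfolding M_def ed_def by auto
      next
        show "{e \<in> M. w \<in> e} \<subseteq> {ed i}"
        proof
          fix x assume x: "x \<in> {e \<in> M. w \<in> e}"
          then obtain j where j: "odd j" "Suc j < n" "x = ed j" "w \<in> ed j" unfolding M_def by auto
          have wj: "w = p!j \<or> w = p!Suc j" using j ed_def by auto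
          have iL: "i < n" "j < n" using i j by auto
          from i(3) wj have "i = j"
          proof (elim disjE)
            assume "w = p!i" "w = p!j"
            then have "p!i = p!j" by simp
            then show ?thesis using idx[of i j] iL by blast
          next
            assume "w = p!i" "w = p!Suc j"
            then have "p!i = p!Suc j" by simp
            then have "i = Suc j" using idx[of i "Suc j"] iL j by blast
            then show ?thesis using i(1) j(1) by presburger
          next
            assume "w = p!Suc i" "w = p!j"
            then have "p!Suc i = p!j" by simp
            then have "Suc i = j" using idx[of "Suc i" j] iL i by blast
            then show ?thesis using i(1) j(1) by presburger
          next
            assume "w = p!Suc i" "w = p!Suc j"
            then have "p!Suc i = p!Suc j" by simp
            then show ?thesis using idx[of "Suc i" "Suc j"] i j by auto
          qed
          then show "x \<in> {ed i}" using j by simp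
        qed
      qed
    qed
    have cnt: "\<And>i w X. odd i \<Longrightarrow> Suc i < n \<Longrightarrow> w = p!i \<or> w = p!Suc i \<Longrightarrow>
        card {e \<in> X \<inter> M. w \<in> e} = (if ed i \<in> X then 1 else 0)"
    proof -
      fix i w X assume i: "odd i" "Suc i < n" "w = p!i \<or> w = p!Suc i"
      have "{e \<in> X \<inter> M. w \<in> e} = X \<inter> {e \<in> M. w \<in> e}" by auto
      also have "\<dots> = X \<inter> {ed i}" using Mw[OF i] by simp
      finally show "card {e \<in> X \<inter> M. w \<in> e} = (if ed i \<in> X then 1 else 0)" by auto
    qed
    have GI: "graphical_instance V' E' f'"
      unfolding graphical_instance_def
    proof (intro ballI conjI allI impI)
      fix w X assume "w \<in> V'" "X \<subseteq> E'"
      show "0 \<le> f' w X"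
      proof (cases "w \<in> V")
        case True then show ?thesis using inst unfolding graphical_instance_def f'_def by auto
      qed (simp add: f'_def)
    next
      fix w A B assume w: "w \<in> V'" and AB: "A \<subseteq> B" "B \<subseteq> E'"
      show "f' w A \<le> f' w B"
      proof (cases "w \<in> V")
        case True
        have "A \<inter> E \<subseteq> B \<inter> E" "B \<inter> E \<subseteq> E" using AB by auto
        then show ?thesis using True inst unfolding graphical_instance_def f'_def by auto
      next
        case False
        have "finite {e \<in> B \<inter> M. w \<in> e}" using finM by (rule rev_finite_subset) auto
        then have "card {e \<in> A \<inter> M. w \<in> e} \<le> card {e \<in> B \<inter> M. w \<in> e}"
          by (rule card_mono) (use AB in auto)
        then show ?thesis using False unfolding f'_def by simp
      qed
    next
      fix w X assume w: "w \<in> V'" and X: "X \<subseteq> E'"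
      show "f' w X = f' w (X \<inter> incident E' w)"
      proof (cases "w \<in> V")
        case True
        have "f w (X \<inter> E) = f w (X \<inter> E \<inter> incident E w)"
          using True inst unfolding graphical_instance_def by auto
        moreover have "X \<inter> E \<inter> incident E w = X \<inter> incident E' w \<inter> E"
          using X unfolding incident_def E'_def by auto
        ultimately show ?thesis using True unfolding f'_def by simp
      next
        case False
        have "{e \<in> X \<inter> M. w \<in> e} = {e \<in> X \<inter> incident E' w \<inter> M. w \<in> e}"
          using X unfolding incident_def by auto
        then show ?thesis using False unfolding f'_def by simp
      qed
    qed
    obtain h' where EFX': "EFX_orientation V' E' f' h'"
      using SE GI unfolding strongly_EFX_orientable_def V'_def E'_def by blast
    have or': "\<And>e. e \<in> E' \<Longrightarrow> h' e \<in> e"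
      using EFX' unfolding EFX_orientation_def orientation_def by blast
    have efx': "\<And>a b g. a \<in> V' \<Longrightarrow> b \<in> V' \<Longrightarrow> g \<in> bundle_of E' h' b \<Longrightarrow>
        f' a (bundle_of E' h' b - {g}) \<le> f' a (bundle_of E' h' a)"
      using EFX' unfolding EFX_orientation_def by blast
    have ed_in: "\<And>i. Suc i < n \<Longrightarrow> ed i \<in> E'" unfolding E'_def pe by auto
    have ed_head: "\<And>i. Suc i < n \<Longrightarrow> h' (ed i) = p!i \<or> h' (ed i) = p!Suc i"
      using or' ed_in unfolding ed_def by blast
    have inV': "\<And>i. i < n \<Longrightarrow> p!i \<in> V'" unfolding V'_def n_def by simp
    have bdl: "\<And>e w. e \<in> E' \<Longrightarrow> h' e = w \<Longrightarrow> e \<in> bundle_of E' h' w"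
      unfolding bundle_of_def by simp
    have step1: "h' (ed 0) \<noteq> u \<Longrightarrow> h' (ed (n-2)) = v"
    proof -
      assume h0: "h' (ed 0) \<noteq> u"
      obtain m where m: "n = 2*m" using nev by (auto elim: evenE)
      define k where "k = m - 1"
      have k: "n = 2*k+2" using m n4 unfolding k_def by simp
      have "\<forall>j. j \<le> k \<longrightarrow> h' (ed (2*j)) = p!(2*j+1)"
      proof (intro allI)
        fix j show "j \<le> k \<longrightarrow> h' (ed (2*j)) = p!(2*j+1)"
        proof (induction j)
          case 0
          then show ?case using h0 ed_head[of 0] p0 k by auto
        next
          case (Suc j)
          show ?case
          proof
            assume jk: "Suc j \<le> k"
            then have IH: "h' (ed (2*j)) = p!(2*j+1)" using Suc by simp
            define a where "a = p!(2*j+1)"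
            define b where "b = p!(2*j+2)"
            have aV: "a \<notin> V" using internal[of "2*j+1"] jk k unfolding a_def by simp
            have bV: "b \<notin> V" using internal[of "2*j+2"] jk k unfolding b_def by simp
            have ab: "a \<noteq> b" using idx[of "2*j+1" "2*j+2"] jk k unfolding a_def b_def by simp
            have aV': "a \<in> V'" "b \<in> V'" using inV' jk k unfolding a_def b_def by auto
            have o: "odd (2*j+1)" "Suc (2*j+1) < n" using jk k by auto
            have ca: "\<And>X. f' a X = (if ed (2*j+1) \<in> X then 1 else 0)"
              using cnt[OF o, of a] aV unfolding f'_def a_def by simp
            have cb: "\<And>X. f' b X = (if ed (2*j+1) \<in> X then 1 else 0)"
              using cnt[OF o, of b] bV unfolding f'_def b_def by simp
            have d1: "ed (2*j) \<noteq> ed (2*j+1)"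
              using idx[of "2*j+2" "2*j"] idx[of "2*j+2" "2*j+1"] jk k unfolding ed_def by auto
            have d2: "ed (2*j+2) \<noteq> ed (2*j+1)"
            proof
              assume eq: "ed (2*j+2) = ed (2*j+1)"
              have "p!Suc(2*j+2) \<in> ed (2*j+2)" unfolding ed_def by simp
              then have "p!Suc(2*j+2) \<in> ed (2*j+1)" using eq by simp
              then have "p!Suc(2*j+2) = p!(2*j+1) \<or> p!Suc(2*j+2) = p!Suc(2*j+1)"
                unfolding ed_def by blast
              moreover have "Suc(2*j+2) < n" "2*j+1 < n" "Suc(2*j+1) < n" using jk k by auto
              ultimately show False using idx[of "Suc(2*j+2)" "2*j+1"] idx[of "Suc(2*j+2)" "Suc(2*j+1)"]
                by auto
            qed
            have hd: "h' (ed (2*j+1)) = a \<or> h' (ed (2*j+1)) = b"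
              using ed_head[of "2*j+1"] jk k unfolding a_def b_def by auto
            show "h' (ed (2*Suc j)) = p!(2*Suc j+1)"
            proof (cases "h' (ed (2*j+1)) = a")
              case True
              have g: "ed (2*j) \<in> bundle_of E' h' a" using bdl ed_in IH jk k unfolding a_def by auto
              have "ed (2*j+1) \<in> bundle_of E' h' a - {ed (2*j)}"
                using bdl ed_in True d1 jk k by auto
              moreover have "ed (2*j+1) \<notin> bundle_of E' h' b"
                using True ab unfolding bundle_of_def by auto
              ultimately show ?thesis using efx'[OF aV'(2) aV'(1) g] cb by simp
            next
              case False
              then have hb: "h' (ed (2*j+1)) = b" using hd by simp
              have "h' (ed (2*j+2)) \<noteq> b"
              proof
                assume h2: "h' (ed (2*j+2)) = b"
                have g: "ed (2*j+2) \<in> bundle_of E' h' b" using bdl ed_in h2 jk k by auto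
                have "ed (2*j+1) \<in> bundle_of E' h' b - {ed (2*j+2)}"
                  using bdl ed_in hb d2 jk k by auto
                moreover have "ed (2*j+1) \<notin> bundle_of E' h' a"
                  using hb ab unfolding bundle_of_def by auto
                ultimately show False using efx'[OF aV'(1) aV'(2) g] ca by simp
              qed
              then show ?thesis using ed_head[of "2*j+2"] jk k unfolding b_def
                by (auto simp: numeral_3_eq_3)
            qed
          qed
        qed
      qed
      then have "h' (ed (2*k)) = p!(2*k+1)" by simp
      then show ?thesis using k pl by simp
    qed
    define h where "h e = (if e = {u,v} then (if h' (ed 0) = u then u else v) else h' e)" for e
    have E'E: "E' \<inter> E = E - {{u,v}}" unfolding E'_def pe using ed_notE by auto
    have bun: "\<And>w. bundle_of E' h' w \<inter> E = bundle_of E h w - {{u,v}}"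
      unfolding bundle_of_def h_def using E'E by auto
    have Z: "\<And>a S. a \<in> V \<Longrightarrow> S \<subseteq> E \<Longrightarrow> f a (S - {{u,v}}) = f a S"
    proof -
      fix a S assume a: "a \<in> V" and S: "S \<subseteq> E"
      show "f a (S - {{u,v}}) = f a S"
      proof (cases "a = u \<or> a = v")
        case True then show ?thesis using zu zv S unfolding zero_value_def by auto
      next
        case False
        have loc: "\<And>X. X \<subseteq> E \<Longrightarrow> f a X = f a (X \<inter> incident E a)"
          using a inst unfolding graphical_instance_def by blast
        have "f a (S - {{u,v}}) = f a ((S - {{u,v}}) \<inter> incident E a)"
          using S by (intro loc) auto
        moreover have "f a S = f a (S \<inter> incident E a)"
          using S by (intro loc)
        moreover have "(S - {{u,v}}) \<inter> incident E a = S \<inter> incident E a"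
          using False unfolding incident_def by auto
        ultimately show ?thesis by simp
      qed
    qed
    have BE: "\<And>w. bundle_of E h w \<subseteq> E" unfolding bundle_of_def by auto
    have lhs: "\<And>a. a \<in> V \<Longrightarrow> f' a (bundle_of E' h' a) = f a (bundle_of E h a)"
      using Z BE bun unfolding f'_def by simp
    have key: "\<And>a w e. a \<in> V \<Longrightarrow> w \<in> V \<Longrightarrow> e \<in> E' \<Longrightarrow> e \<notin> E \<Longrightarrow> h' e = w \<Longrightarrow>
        f a (bundle_of E h w - {{u,v}}) \<le> f a (bundle_of E h a)"
    proof -
      fix a w e assume a: "a \<in> V" and w: "w \<in> V" and e: "e \<in> E'" "e \<notin> E" "h' e = w"
      have g: "e \<in> bundle_of E' h' w" using bdl e by simp
      have "(bundle_of E' h' w - {e}) \<inter> E = bundle_of E h w - {{u,v}}"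
        using bun[of w] e by auto
      then have "f' a (bundle_of E' h' w - {e}) = f a (bundle_of E h w - {{u,v}})"
        using a unfolding f'_def by simp
      then show "f a (bundle_of E h w - {{u,v}}) \<le> f a (bundle_of E h a)"
        using efx'[of a w e] g a w lhs[OF a] unfolding V'_def by simp
    qed
    have "EFX_orientation V E f h"
      unfolding EFX_orientation_def orientation_def
    proof (intro conjI ballI)
      fix x assume "x \<in> E"
      then show "h x \<in> x" using or' unfolding h_def E'_def by auto
    next
      fix a b g assume a: "a \<in> V" and b: "b \<in> V" and g: "g \<in> bundle_of E h b"
      show "f a (bundle_of E h b - {g}) \<le> f a (bundle_of E h a)"
      proof (cases "g = {u,v}")
        case False
        have gE: "g \<in> bundle_of E' h' b" using g False unfolding bundle_of_def h_def E'_def by auto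
        have "(bundle_of E' h' b - {g}) \<inter> E = (bundle_of E h b - {g}) - {{u,v}}"
          using bun[of b] by auto
        then have "f' a (bundle_of E' h' b - {g}) = f a (bundle_of E h b - {g})"
          using a Z[of a "bundle_of E h b - {g}"] BE[of b] unfolding f'_def by auto
        then show ?thesis using efx'[of a b g] gE a b lhs[OF a] unfolding V'_def by simp
      next
        case True
        then have hb: "h {u,v} = b" using g unfolding bundle_of_def by simp
        show ?thesis
        proof (cases "h' (ed 0) = u")
          case True
          then have "b = u" using hb unfolding h_def by simp
          then show ?thesis using key[of a u "ed 0"] a uV True ed_in ed_notE n4 \<open>g = {u,v}\<close> by auto
        next
          case False
          then have "b = v" using hb unfolding h_def by simp
          moreover have "h' (ed (n-2)) = v" using step1 False by simp
          ultimately show ?thesis using key[of a v "ed (n-2)"] a uV ed_in ed_notE n4 \<open>g = {u,v}\<close> by auto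
        qed
      qed
    qed
    then show False using noEFX by blast
  qed
qed

end
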